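(* Let $(M,g)$ be a Riemannian manifold (of any signature) and $p\in M$. Then there exist an integer $k>0$ and homogeneous polynomials $a_i\in\mathscr{P}^i(T_pM)$, $i=1,\dots,k$, such that $$\mathcal{R}^k|_p=-\sum_{i=1}^k a_i\,\mathcal{R}^{k-i}|_p$$ as $\mathrm{End}(T_pM)$-valued polynomial functions on $T_pM$.
   Context: $\nabla$ is the Levi-Civita connection and $\mathrm{R}(X,Y)Z=\nabla_X\nabla_YZ-\nabla_Y\nabla_XZ-\nabla_{[X,Y]}Z$. For $X,Y\in T_pM$, $\mathcal{R}^k|_p(X)Y=(\nabla^k_{X,\dots,X}\mathrm{R})(Y,X)X$; this is a homogeneous polynomial of degree $k+2$ in $X$. $\mathscr{P}^i(T_pM)$ is the space of homogeneous real polynomials of degree $i$ on $T_pM$. *)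

theory Defs
  imports "HOL-Analysis.Analysis"
begin

text \<open>Local-coordinate model of a (pseudo-)Riemannian manifold near p:
  an open set U of real^'n with a smooth metric g (symmetric invertible matrices).
  Tangent vectors at p are identified with real^'n via the coordinate basis.\<close>

definition partial :: "'n::finite \<Rightarrow> (real^'n \<Rightarrow> real) \<Rightarrow> real^'n \<Rightarrow> real" where
  "partial l f x = deriv (\<lambda>t. f (x + t *\<^sub>R axis l 1)) 0"

fun iter_partial :: "'n::finite list \<Rightarrow> (real^'n \<Rightarrow> real) \<Rightarrow> real^'n \<Rightarrow> real" where
  "iter_partial [] f = f"
| "iter_partial (l # ls) f = partial l (iter_partial ls f)"

definition smooth_on :: "(real^'n::finite) set \<Rightarrow> (real^'n \<Rightarrow> real) \<Rightarrow> bool" where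
  "smooth_on U f \<longleftrightarrow> (\<forall>ls. iter_partial ls f differentiable_on U)"

text \<open>Christoffel symbols: nabla_(d_j) d_k = sum_i Gamma^i_jk d_i.\<close>
definition christoffel :: "(real^'n \<Rightarrow> real^'n^'n) \<Rightarrow> real^'n \<Rightarrow> 'n::finite \<Rightarrow> 'n \<Rightarrow> 'n \<Rightarrow> real" where
  "christoffel g x i j k = (1/2) * (\<Sum>l\<in>UNIV. matrix_inv (g x) $ i $ l *
      (partial j (\<lambda>y. g y $ l $ k) x + partial k (\<lambda>y. g y $ l $ j) x - partial l (\<lambda>y. g y $ j $ k) x))"

text \<open>A (1,m)-tensor field is given by components T x i js (upper index i, lower indices js).
  Covariant derivative: the new (derivative) slot is prepended.\<close>
definition cov_deriv :: "(real^'n \<Rightarrow> real^'n^'n) \<Rightarrow> (real^'n \<Rightarrow> 'n::finite \<Rightarrow> 'n list \<Rightarrow> real)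
    \<Rightarrow> real^'n \<Rightarrow> 'n \<Rightarrow> 'n list \<Rightarrow> real" where
  "cov_deriv g T x i js = (case js of [] \<Rightarrow> 0
     | l # ms \<Rightarrow> partial l (\<lambda>y. T y i ms) x
          + (\<Sum>s\<in>UNIV. christoffel g x i l s * T x s ms)
          - (\<Sum>r<length ms. \<Sum>s\<in>UNIV. christoffel g x s l (ms ! r) * T x i (ms[r := s])))"

text \<open>Riemann tensor, R(d_a,d_b)d_c = sum_i R x i [a,b,c] d_i, with
  R(X,Y)Z = nabla_X nabla_Y Z - nabla_Y nabla_X Z - nabla_[X,Y] Z.\<close>
definition curv :: "(real^'n \<Rightarrow> real^'n^'n) \<Rightarrow> real^'n \<Rightarrow> 'n::finite \<Rightarrow> 'n list \<Rightarrow> real" where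
  "curv g x i js = (case js of [a, b, c] \<Rightarrow>
       partial a (\<lambda>y. christoffel g y i b c) x - partial b (\<lambda>y. christoffel g y i a c) x
       + (\<Sum>s\<in>UNIV. christoffel g x s b c * christoffel g x i a s
                   - christoffel g x s a c * christoffel g x i b s)
     | _ \<Rightarrow> 0)"

definition nabla_curv :: "(real^'n \<Rightarrow> real^'n^'n) \<Rightarrow> nat \<Rightarrow> real^'n \<Rightarrow> 'n::finite \<Rightarrow> 'n list \<Rightarrow> real" where
  "nabla_curv g k = (cov_deriv g ^^ k) (curv g)"

text \<open>calR g k p X Y = (nabla^k_{X,...,X} R)(Y,X)X at p.\<close>
definition calR :: "(real^'n \<Rightarrow> real^'n^'n) \<Rightarrow> nat \<Rightarrow> real^'n \<Rightarrow> real^'n \<Rightarrow> real^'n \<Rightarrow> real^'n::finite" where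
  "calR g k p X Y = (\<chi> i. \<Sum>js\<in>{js. length js = k}. \<Sum>a\<in>UNIV. \<Sum>b\<in>UNIV. \<Sum>c\<in>UNIV.
      nabla_curv g k p i (js @ [a, b, c]) * (\<Prod>r<k. X $ (js ! r)) * Y $ a * X $ b * X $ c)"

definition homog_poly :: "nat \<Rightarrow> (real^'n::finite \<Rightarrow> real) \<Rightarrow> bool" where
  "homog_poly d f \<longleftrightarrow> (\<exists>c :: 'n list \<Rightarrow> real. \<forall>X.
      f X = (\<Sum>js\<in>{js. length js = d}. c js * (\<Prod>r<d. X $ (js ! r))))"

end

theory Submission imports Defs "HOL-Library.Multiset_Order" "HOL-Library.Ramsey" begin

definition spt :: "(nat multiset \<Rightarrow> real) \<Rightarrow> nat multiset set" where
  "spt f = {\<beta>. f \<beta> \<noteq> 0}"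

definition lt :: "(nat multiset \<Rightarrow> real) \<Rightarrow> nat multiset" where
  "lt f = Max (spt f)"

lemma spt_nonempty: "f \<noteq> (\<lambda>_. 0) \<Longrightarrow> spt f \<noteq> {}"
  unfolding spt_def by auto

lemma lt_in: "finite (spt f) \<Longrightarrow> f \<noteq> (\<lambda>_. 0) \<Longrightarrow> f (lt f) \<noteq> 0"
  unfolding lt_def using Max_in[of "spt f"] spt_nonempty[of f] by (auto simp: spt_def)

lemma lt_ge: "finite (spt f) \<Longrightarrow> f \<beta> \<noteq> 0 \<Longrightarrow> \<beta> \<le> lt f"
  unfolding lt_def by (rule Max_ge) (auto simp: spt_def)

lemma lt_reduce:
  fixes A B :: "(nat multiset \<Rightarrow> real) set"
  assumes fin: "\<forall>f\<in>B. finite (spt f)"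
    and AB: "A \<subseteq> B"
    and A0: "(\<lambda>_. 0) \<in> A"
    and Aadd: "\<forall>f\<in>A. \<forall>g\<in>A. (\<lambda>x. f x + g x) \<in> A"
    and Asc: "\<forall>f\<in>A. \<forall>c. (\<lambda>x. c * f x) \<in> A"
    and Badd: "\<forall>f\<in>B. \<forall>g\<in>B. (\<lambda>x. f x + g x) \<in> B"
    and Bsc: "\<forall>f\<in>B. \<forall>c. (\<lambda>x. c * f x) \<in> B"
    and LT: "\<forall>h\<in>B. h \<noteq> (\<lambda>_. 0) \<longrightarrow> (\<exists>g\<in>A. g \<noteq> (\<lambda>_. 0) \<and> lt g = lt h)"
  shows "B \<subseteq> A"
proof -
  have main: "\<forall>f\<in>B. f \<noteq> (\<lambda>_. 0) \<longrightarrow> lt f = \<sigma> \<longrightarrow> f \<in> A" for \<sigma>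
  proof (induction \<sigma> rule: less_induct)
    case (less \<sigma>)
    show ?case
    proof (intro ballI impI)
      fix f assume fB: "f \<in> B" and f0: "f \<noteq> (\<lambda>_. 0)" and lf: "lt f = \<sigma>"
      obtain g where gA: "g \<in> A" and g0: "g \<noteq> (\<lambda>_. 0)" and lg: "lt g = \<sigma>"
        using LT fB f0 lf by metis
      have gB: "g \<in> B" using gA AB by auto
      have gs: "g \<sigma> \<noteq> 0" using lt_in[of g] fin gB g0 lg by auto
      define c where "c = f \<sigma> / g \<sigma>"
      define h where "h = (\<lambda>x. f x + (- c) * g x)"
      have "(\<lambda>x. (- c) * g x) \<in> B" using Bsc gB by blast
      then have "(\<lambda>x. f x + (\<lambda>y. - c * g y) x) \<in> B" by (rule Badd[rule_format, OF fB])
      then have hB: "h \<in> B" by (simp add: h_def)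
      have hs: "h \<sigma> = 0" unfolding h_def c_def using gs by simp
      have hlt: "\<beta> < \<sigma>" if "h \<beta> \<noteq> 0" for \<beta>
      proof -
        have "f \<beta> \<noteq> 0 \<or> g \<beta> \<noteq> 0" using that unfolding h_def by auto
        then have "\<beta> \<le> \<sigma>" using lt_ge[of f \<beta>] lt_ge[of g \<beta>] fin fB gB lf lg by auto
        moreover have "\<beta> \<noteq> \<sigma>" using that hs by auto
        ultimately show ?thesis by simp
      qed
      show "f \<in> A"
      proof (cases "h = (\<lambda>_. 0)")
        case True
        have "f x = c * g x" for x
        proof -
          have "h x = 0" using True by simp
          then show ?thesis unfolding h_def by linarith
        qed
        then have "f = (\<lambda>x. c * g x)" by (intro ext)
        then show ?thesis using Asc[rule_format, OF gA, of c] by simp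
      next
        case False
        have "h (lt h) \<noteq> 0" using lt_in[of h] fin hB False by auto
        then have "lt h < \<sigma>" using hlt by auto
        then have hA: "h \<in> A" using less hB False by blast
        have "f = (\<lambda>x. h x + c * g x)" unfolding h_def by auto
        moreover have "(\<lambda>x. h x + (\<lambda>y. c * g y) x) \<in> A"
          by (rule Aadd[rule_format, OF hA Asc[rule_format, OF gA]])
        ultimately show ?thesis by simp
      qed
    qed
  qed
  show ?thesis
  proof
    fix f assume "f \<in> B"
    then show "f \<in> A" using main A0 by (cases "f = (\<lambda>_. 0)") auto
  qed
qed

lemma dickson_aux:
  fixes s :: "nat \<Rightarrow> nat multiset"
  assumes "finite C" and "infinite Z"
  shows "\<exists>Y\<subseteq>Z. infinite Y \<and> (\<forall>x\<in>Y. \<forall>y\<in>Y. x < y \<longrightarrow> (\<forall>c\<in>C. count (s x) c \<le> count (s y) c))"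
  using assms(1)
proof (induction C rule: finite_induct)
  case empty
  then show ?case using assms(2) by blast
next
  case (insert c C)
  then obtain Y where YZ: "Y \<subseteq> Z" and Yinf: "infinite Y"
    and Yp: "\<forall>x\<in>Y. \<forall>y\<in>Y. x < y \<longrightarrow> (\<forall>c\<in>C. count (s x) c \<le> count (s y) c)" by blast
  define col where "col = (\<lambda>X::nat set. if count (s (Min X)) c \<le> count (s (Max X)) c then 0 else (1::nat))"
  have "\<forall>x\<in>Y. \<forall>y\<in>Y. x \<noteq> y \<longrightarrow> col {x, y} < 2" unfolding col_def by auto
  then obtain Y' t where Y'Y: "Y' \<subseteq> Y" and Y'inf: "infinite Y'" and "t < 2"
    and hom: "\<forall>x\<in>Y'. \<forall>y\<in>Y'. x \<noteq> y \<longrightarrow> col {x, y} = t"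
    using Ramsey2[where Z=Y and f=col and s=2, OF Yinf] by auto
  have colxy: "col {x, y} = (if count (s x) c \<le> count (s y) c then 0 else 1)" if "x < y" for x y
    using that unfolding col_def by (simp add: min_def max_def)
  show ?case
  proof (cases "t = 0")
    case True
    have "\<forall>x\<in>Y'. \<forall>y\<in>Y'. x < y \<longrightarrow> count (s x) c \<le> count (s y) c"
    proof (intro ballI impI)
      fix x y assume "x \<in> Y'" "y \<in> Y'" "x < y"
      then have "col {x, y} = 0" using hom True by auto
      then show "count (s x) c \<le> count (s y) c" using colxy[OF \<open>x < y\<close>] by (auto split: if_splits)
    qed
    then show ?thesis using Y'Y YZ Y'inf Yp by (intro exI[of _ Y']) (auto, blast)
  next
    case False
    then have t1: "t = 1" using \<open>t < 2\<close> by auto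
    have dec: "\<forall>x\<in>Y'. \<forall>y\<in>Y'. x < y \<longrightarrow> count (s y) c < count (s x) c"
    proof (intro ballI impI)
      fix x y assume "x \<in> Y'" "y \<in> Y'" "x < y"
      then have "col {x, y} = 1" using hom t1 by auto
      moreover have "col {x, y} = (if count (s x) c \<le> count (s y) c then 0 else 1)" by (rule colxy) fact
      ultimately have "\<not> count (s x) c \<le> count (s y) c" by (cases "count (s x) c \<le> count (s y) c") simp_all
      then show "count (s y) c < count (s x) c" by simp
    qed
    have "Y' \<noteq> {}" using Y'inf by auto
    then obtain x0 where x0: "x0 \<in> Y'" by blast
    define Y'' where "Y'' = Y' - {..x0}"
    have inf2: "infinite Y''" unfolding Y''_def using Y'inf by (simp add: Diff_infinite_finite)
    have "inj_on (\<lambda>y. count (s y) c) Y''"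
    proof (rule inj_onI)
      fix a b assume a: "a \<in> Y''" and b: "b \<in> Y''" and e: "count (s a) c = count (s b) c"
      show "a = b"
      proof (rule ccontr)
        assume "a \<noteq> b"
        then consider "a < b" | "b < a" by linarith
        moreover have "a \<in> Y'" "b \<in> Y'" using a b unfolding Y''_def by auto
        ultimately show False
        proof cases
          case 1 then show False using dec \<open>a \<in> Y'\<close> \<open>b \<in> Y'\<close> e by fastforce
        next
          case 2 then show False using dec \<open>a \<in> Y'\<close> \<open>b \<in> Y'\<close> e by fastforce
        qed
      qed
    qed
    moreover have "(\<lambda>y. count (s y) c) ` Y'' \<subseteq> {..< count (s x0) c}"
      using dec x0 unfolding Y''_def by (auto simp: not_le) (meson dec not_le)
    ultimately have "finite Y''" by (rule inj_on_finite) simp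
    then show ?thesis using inf2 by blast
  qed
qed

lemma dickson:
  fixes s :: "nat \<Rightarrow> nat multiset"
  assumes "finite E" and "\<forall>k. set_mset (s k) \<subseteq> E"
  shows "\<exists>i j. i < j \<and> s i \<subseteq># s j"
proof -
  obtain Y where "infinite Y" and Y: "\<forall>x\<in>Y. \<forall>y\<in>Y. x < y \<longrightarrow> (\<forall>c\<in>E. count (s x) c \<le> count (s y) c)"
    using dickson_aux[OF assms(1), of "UNIV :: nat set" s] by auto
  then have "Y \<noteq> {}" by auto
  then obtain x where "x \<in> Y" by blast
  have "infinite (Y - {..x})" using \<open>infinite Y\<close> by (simp add: Diff_infinite_finite)
  then have "Y - {..x} \<noteq> {}" by (metis finite.emptyI)
  then obtain y where "y \<in> Y - {..x}" by blast
  then have "y \<in> Y" "x < y" by auto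
  note xy = \<open>x \<in> Y\<close> this
  have "count (s x) c \<le> count (s y) c" for c
  proof (cases "c \<in> E")
    case True then show ?thesis using Y xy by blast
  next
    case False then have "count (s x) c = 0" using assms(2) by (meson count_inI subsetD not_gr0)
    then show ?thesis by simp
  qed
  then show ?thesis using xy by (auto simp: subseteq_mset_def)
qed


definition mulx :: "nat \<Rightarrow> (nat multiset \<Rightarrow> real) \<Rightarrow> nat multiset \<Rightarrow> real" where
  "mulx x f \<beta> = (if 2*x \<in># \<beta> then f (\<beta> - {#2*x#}) else 0)"

lemma mulx_add: "mulx x f (add_mset (2*x) \<beta>) = f \<beta>"
  unfolding mulx_def by simp

lemma spt_mulx: "spt (mulx x f) = add_mset (2*x) ` spt f"
proof
  show "spt (mulx x f) \<subseteq> add_mset (2*x) ` spt f"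
  proof
    fix \<beta> assume "\<beta> \<in> spt (mulx x f)"
    then have a: "2*x \<in># \<beta>" and b: "f (\<beta> - {#2*x#}) \<noteq> 0" unfolding spt_def mulx_def
      by (auto split: if_splits)
    have "\<beta> = add_mset (2*x) (\<beta> - {#2*x#})" using a by (simp add: insert_DiffM)
    then show "\<beta> \<in> add_mset (2*x) ` spt f" using b unfolding spt_def by blast
  qed
next
  show "add_mset (2*x) ` spt f \<subseteq> spt (mulx x f)"
    unfolding spt_def using mulx_add by auto
qed

lemma mulx_nz: "f \<noteq> (\<lambda>_. 0) \<Longrightarrow> mulx x f \<noteq> (\<lambda>_. 0)"
proof -
  assume "f \<noteq> (\<lambda>_. 0)"
  then obtain \<beta> where "f \<beta> \<noteq> 0" by auto
  then have "mulx x f (add_mset (2*x) \<beta>) \<noteq> 0" by (simp add: mulx_add)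
  then show ?thesis by auto
qed

lemma mono_add_mset: "mono (add_mset (y::nat))"
proof (rule monoI)
  fix A B :: "nat multiset" assume "A \<le> B"
  then have "A + {#y#} \<le> B + {#y#}" by (rule add_right_mono)
  then show "add_mset y A \<le> add_mset y B" by (simp only: add_mset_add_single[symmetric])
qed

lemma lt_mulx:
  assumes "finite (spt f)" "f \<noteq> (\<lambda>_. 0)"
  shows "lt (mulx x f) = add_mset (2*x) (lt f)"
  unfolding lt_def spt_mulx
  using mono_Max_commute[OF mono_add_mset, of "spt f" "2*x"] assms spt_nonempty[of f] by simp

inductive G :: "(nat \<Rightarrow> nat multiset \<Rightarrow> real) \<Rightarrow> nat set \<Rightarrow> nat \<Rightarrow> nat \<Rightarrow> (nat multiset \<Rightarrow> real) \<Rightarrow> bool"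
  for v E k where
  Gv: "j \<le> k \<Longrightarrow> G v E k (j+2) (v j)"
| G0: "G v E k d (\<lambda>_. 0)"
| Gadd: "G v E k d f \<Longrightarrow> G v E k d g \<Longrightarrow> G v E k d (\<lambda>\<beta>. f \<beta> + g \<beta>)"
| Gsc: "G v E k d f \<Longrightarrow> G v E k d (\<lambda>\<beta>. c * f \<beta>)"
| Gmul: "x \<in> E \<Longrightarrow> G v E k d f \<Longrightarrow> G v E k (Suc d) (mulx x f)"

lemma G_mono: "G v E k d f \<Longrightarrow> k \<le> k' \<Longrightarrow> G v E k' d f"
proof (induction rule: G.induct)
  case (Gv j) then show ?case by (intro G.Gv) simp
qed (auto intro: G.intros)

lemma G_fin:
  assumes "\<forall>j. finite (spt (v j))" and "G v E k d f"
  shows "finite (spt f)"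
  using assms(2)
proof (induction rule: G.induct)
  case (G0 d) then show ?case by (simp add: spt_def)
next
  case (Gadd d f g)
  have "spt (\<lambda>\<beta>. f \<beta> + g \<beta>) \<subseteq> spt f \<union> spt g" unfolding spt_def by auto
  then show ?case using Gadd finite_subset by blast
next
  case (Gsc d f c)
  have "spt (\<lambda>\<beta>. c * f \<beta>) \<subseteq> spt f" unfolding spt_def by auto
  then show ?case using Gsc finite_subset by blast
next
  case (Gmul x d f) then show ?case by (simp add: spt_mulx)
qed (use assms in auto)

definition okb :: "nat set \<Rightarrow> nat set \<Rightarrow> nat \<Rightarrow> nat multiset \<Rightarrow> bool" where
  "okb E TT d \<beta> \<longleftrightarrow> (\<exists>t\<in>TT. filter_mset odd \<beta> = {#2*t+1#}) \<and> size (filter_mset even \<beta>) = d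
     \<and> (\<forall>y\<in>#\<beta>. even y \<longrightarrow> y div 2 \<in> E)"

lemma okb_mul: "okb E TT d \<beta> \<Longrightarrow> x \<in> E \<Longrightarrow> okb E TT (Suc d) (add_mset (2*x) \<beta>)"
  unfolding okb_def by auto

lemma G_ok: "G v E k d f \<Longrightarrow> (\<forall>j \<beta>. v j \<beta> \<noteq> 0 \<longrightarrow> okb E TT (j+2) \<beta>) \<Longrightarrow> f \<beta> \<noteq> 0 \<Longrightarrow> okb E TT d \<beta>"
proof (induction arbitrary: \<beta> rule: G.induct)
  case (Gmul x d f)
  then have a: "2*x \<in># \<beta>" and b: "f (\<beta> - {#2*x#}) \<noteq> 0" unfolding mulx_def
    by (auto split: if_splits)
  have "\<beta> = add_mset (2*x) (\<beta> - {#2*x#})" using a by (simp add: insert_DiffM)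
  then show ?case using okb_mul[OF Gmul.IH[OF Gmul.prems(1) b] Gmul.hyps(1)] by simp
next
  case (Gadd d f g) then show ?case by (cases "f \<beta> = 0") auto
qed auto

lemma okb_set: "okb E TT d \<beta> \<Longrightarrow> set_mset \<beta> \<subseteq> (\<lambda>x. 2*x) ` E \<union> (\<lambda>t. 2*t+1) ` TT"
proof
  fix y assume ok: "okb E TT d \<beta>" and y: "y \<in># \<beta>"
  show "y \<in> (\<lambda>x. 2*x) ` E \<union> (\<lambda>t. 2*t+1) ` TT"
  proof (cases "even y")
    case True
    then have "y div 2 \<in> E" using ok y unfolding okb_def by auto
    moreover have "y = 2 * (y div 2)" using True by simp
    ultimately show ?thesis by blast
  next
    case False
    obtain t where t: "t \<in> TT" "filter_mset odd \<beta> = {#2*t+1#}" using ok unfolding okb_def by auto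
    have "y \<in># filter_mset odd \<beta>" using False y by simp
    then have "y = 2*t+1" using t by simp
    then show ?thesis using t by blast
  qed
qed

definition LTs :: "(nat \<Rightarrow> nat multiset \<Rightarrow> real) \<Rightarrow> nat set \<Rightarrow> nat \<Rightarrow> nat multiset set" where
  "LTs v E k = {lt f | f d. G v E k d f \<and> f \<noteq> (\<lambda>_. 0)}"

lemma LTs_up:
  assumes vfin: "\<forall>j. finite (spt (v j))"
  shows "\<sigma> \<in> LTs v E k \<Longrightarrow> \<forall>y\<in>#\<gamma>. even y \<and> y div 2 \<in> E \<Longrightarrow> \<sigma> + \<gamma> \<in> LTs v E k"
proof (induction \<gamma>)
  case empty then show ?case by simp
next
  case (add y \<gamma>)
  then have "\<sigma> + \<gamma> \<in> LTs v E k" by simp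
  then obtain f d where Gf: "G v E k d f" and f0: "f \<noteq> (\<lambda>_. 0)" and lf: "lt f = \<sigma> + \<gamma>"
    unfolding LTs_def by auto
  have ye: "even y" "y div 2 \<in> E" using add.prems by auto
  have "G v E k (Suc d) (mulx (y div 2) f)" by (rule Gmul[OF ye(2) Gf])
  moreover have "mulx (y div 2) f \<noteq> (\<lambda>_. 0)" by (rule mulx_nz[OF f0])
  moreover have "lt (mulx (y div 2) f) = add_mset y (\<sigma> + \<gamma>)"
    using lt_mulx[OF G_fin[OF vfin Gf] f0, of "y div 2"] lf ye(1) by simp
  ultimately show ?case unfolding LTs_def mem_Collect_eq
    by (intro exI[of _ "mulx (y div 2) f"] exI[of _ "Suc d"]) simp
qed

lemma core:
  assumes finE: "finite E" and finT: "finite TT"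
    and vfin: "\<forall>j. finite (spt (v j))"
    and vok: "\<forall>j \<beta>. v j \<beta> \<noteq> 0 \<longrightarrow> okb E TT (j+2) \<beta>"
  shows "\<exists>k>0. G v E (k-1) (k+2) (v k)"
proof (rule ccontr)
  assume H: "\<not> ?thesis"
  have ex: "\<exists>\<sigma>. k > 0 \<longrightarrow> (\<sigma> \<in> LTs v E k \<and> \<sigma> \<notin> LTs v E (k-1) \<and> okb E TT (k+2) \<sigma>)" for k
  proof (cases "k > 0")
    case False then show ?thesis by simp
  next
    case True
    define B where "B = {f. G v E k (k+2) f}"
    define A where "A = {f. G v E (k-1) (k+2) f}"
    have vB: "v k \<in> B" unfolding B_def using Gv[of k k v E] by simp
    have vA: "v k \<notin> A" unfolding A_def using H True by blast
    have "\<not> (\<forall>h\<in>B. h \<noteq> (\<lambda>_. 0) \<longrightarrow> (\<exists>g\<in>A. g \<noteq> (\<lambda>_. 0) \<and> lt g = lt h))"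
    proof
      assume LT: "\<forall>h\<in>B. h \<noteq> (\<lambda>_. 0) \<longrightarrow> (\<exists>g\<in>A. g \<noteq> (\<lambda>_. 0) \<and> lt g = lt h)"
      have "B \<subseteq> A"
      proof (rule lt_reduce[OF _ _ _ _ _ _ _ LT])
        show "\<forall>f\<in>B. finite (spt f)" unfolding B_def using G_fin[OF vfin] by blast
        show "A \<subseteq> B" unfolding A_def B_def using G_mono[of v E "k-1" "k+2" _ k] by auto
        show "(\<lambda>_. 0) \<in> A" unfolding A_def by (simp add: G0)
        show "\<forall>f\<in>A. \<forall>g\<in>A. (\<lambda>x. f x + g x) \<in> A" unfolding A_def by (simp add: Gadd)
        show "\<forall>f\<in>A. \<forall>c. (\<lambda>x. c * f x) \<in> A" unfolding A_def by (simp add: Gsc)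
        show "\<forall>f\<in>B. \<forall>g\<in>B. (\<lambda>x. f x + g x) \<in> B" unfolding B_def by (simp add: Gadd)
        show "\<forall>f\<in>B. \<forall>c. (\<lambda>x. c * f x) \<in> B" unfolding B_def by (simp add: Gsc)
      qed
      then show False using vA vB by blast
    qed
    then obtain h where hB: "h \<in> B" and h0: "h \<noteq> (\<lambda>_. 0)"
      and hn: "\<forall>g\<in>A. g \<noteq> (\<lambda>_. 0) \<longrightarrow> lt g \<noteq> lt h" by blast
    have Gh: "G v E k (k+2) h" using hB unfolding B_def by simp
    have okh: "okb E TT (k+2) (lt h)"
      using G_ok[OF Gh vok lt_in[OF G_fin[OF vfin Gh] h0]] .
    have "lt h \<in> LTs v E k" unfolding LTs_def using Gh h0 by blast
    moreover have "lt h \<notin> LTs v E (k-1)"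
    proof
      assume "lt h \<in> LTs v E (k-1)"
      then obtain g d where Gg: "G v E (k-1) d g" and g0: "g \<noteq> (\<lambda>_. 0)" and lg: "lt g = lt h"
        unfolding LTs_def by auto
      have "okb E TT d (lt g)" using G_ok[OF Gg vok lt_in[OF G_fin[OF vfin Gg] g0]] .
      then have "d = k+2" using okh lg unfolding okb_def by auto
      then have "g \<in> A" unfolding A_def using Gg by simp
      then show False using hn g0 lg by blast
    qed
    ultimately show ?thesis using okh by blast
  qed
  from choice[OF allI[OF ex]] obtain s where
    s': "\<forall>k. k > 0 \<longrightarrow> s k \<in> LTs v E k \<and> s k \<notin> LTs v E (k-1) \<and> okb E TT (k+2) (s k)" ..
  have s: "s k \<in> LTs v E k \<and> s k \<notin> LTs v E (k-1) \<and> okb E TT (k+2) (s k)" if "k > 0" for k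
    using s' that by blast
  define E' where "E' = (\<lambda>x. 2*x) ` E \<union> (\<lambda>t. 2*t+1) ` TT"
  have fE': "finite E'" unfolding E'_def using finE finT by simp
  have sE':  "\<forall>n. set_mset (s (Suc n)) \<subseteq> E'"
  proof
    fix n
    have "okb E TT (Suc n + 2) (s (Suc n))" using s[of "Suc n"] by simp
    from okb_set[OF this] show "set_mset (s (Suc n)) \<subseteq> E'" unfolding E'_def .
  qed
  from dickson[OF fE' sE'] obtain i j where ij: "i < j" and sub: "s (Suc i) \<subseteq># s (Suc j)"
    by blast
  define \<gamma> where "\<gamma> = s (Suc j) - s (Suc i)"
  have sg: "s (Suc i) + \<gamma> = s (Suc j)" unfolding \<gamma>_def using sub by (simp add: subset_mset.add_diff_inverse)
  have oka: "okb E TT (Suc i + 2) (s (Suc i))" and okb': "okb E TT (Suc j + 2) (s (Suc j))" using s by auto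
  obtain t1 where t1: "filter_mset odd (s (Suc i)) = {#2*t1+1#}" using oka unfolding okb_def by auto
  obtain t2 where t2: "filter_mset odd (s (Suc j)) = {#2*t2+1#}" using okb' unfolding okb_def by auto
  have fe: "filter_mset odd (s (Suc j)) = filter_mset odd (s (Suc i)) + filter_mset odd \<gamma>"
    unfolding sg[symmetric] by simp
  have "size (filter_mset odd \<gamma>) = 0" using t1 t2 arg_cong[OF fe, of size]
    by simp
  then have go: "filter_mset odd \<gamma> = {#}" by simp
  have "\<forall>y\<in>#\<gamma>. even y \<and> y div 2 \<in> E"
  proof
    fix y assume y: "y \<in># \<gamma>"
    have ev: "even y"
    proof (rule ccontr)
      assume "odd y"
      then have "y \<in># filter_mset odd \<gamma>" using y by simp
      then show False using go by simp
    qed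
    have "y \<in># s (Suc j)" unfolding sg[symmetric] using y by simp
    then have "y div 2 \<in> E" using okb' ev unfolding okb_def by auto
    then show "even y \<and> y div 2 \<in> E" using ev by simp
  qed
  then have "s (Suc j) \<in> LTs v E (Suc i)"
    using LTs_up[OF vfin, of "s (Suc i)" E "Suc i" \<gamma>] s[of "Suc i"] sg by simp
  moreover have "LTs v E (Suc i) \<subseteq> LTs v E (Suc j - 1)"
  proof -
    have "Suc i \<le> Suc j - 1" using ij by simp
    then show ?thesis unfolding LTs_def using G_mono[of v E "Suc i" _ _ "Suc j - 1"] by blast
  qed
  ultimately show False using s[of "Suc j"] by auto
qed


definition monv :: "(nat \<Rightarrow> real) \<Rightarrow> nat multiset \<Rightarrow> real" where
  "monv xv \<beta> = prod_mset (image_mset (\<lambda>y. xv (y div 2)) (filter_mset even \<beta>))"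

definition evw :: "(nat multiset \<Rightarrow> real) \<Rightarrow> (nat \<Rightarrow> real) \<Rightarrow> nat \<Rightarrow> nat multiset \<Rightarrow> real" where
  "evw f xv t \<beta> = (if filter_mset odd \<beta> = {#2*t+1#} then f \<beta> * monv xv \<beta> else 0)"

definition ev :: "(nat multiset \<Rightarrow> real) \<Rightarrow> (nat \<Rightarrow> real) \<Rightarrow> nat \<Rightarrow> real" where
  "ev f xv t = (\<Sum>\<beta>\<in>spt f. evw f xv t \<beta>)"

lemma ev_super: "finite S \<Longrightarrow> spt f \<subseteq> S \<Longrightarrow> ev f xv t = (\<Sum>\<beta>\<in>S. evw f xv t \<beta>)"
  unfolding ev_def by (rule sum.mono_neutral_left) (auto simp: evw_def spt_def)

lemma ev_add:
  assumes "finite (spt f)" "finite (spt g)"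
  shows "ev (\<lambda>\<beta>. f \<beta> + g \<beta>) xv t = ev f xv t + ev g xv t"
proof -
  let ?S = "spt f \<union> spt g"
  have fs: "finite ?S" using assms by simp
  have "spt (\<lambda>\<beta>. f \<beta> + g \<beta>) \<subseteq> ?S" unfolding spt_def by auto
  then have "ev (\<lambda>\<beta>. f \<beta> + g \<beta>) xv t = (\<Sum>\<beta>\<in>?S. evw (\<lambda>\<beta>. f \<beta> + g \<beta>) xv t \<beta>)"
    using ev_super[OF fs] by blast
  also have "\<dots> = (\<Sum>\<beta>\<in>?S. evw f xv t \<beta>) + (\<Sum>\<beta>\<in>?S. evw g xv t \<beta>)"
    unfolding sum.distrib[symmetric] by (rule sum.cong) (auto simp: evw_def distrib_right)
  also have "\<dots> = ev f xv t + ev g xv t"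
    using ev_super[OF fs, of f] ev_super[OF fs, of g] by auto
  finally show ?thesis .
qed

lemma ev_sc:
  assumes "finite (spt f)"
  shows "ev (\<lambda>\<beta>. c * f \<beta>) xv t = c * ev f xv t"
proof -
  have "spt (\<lambda>\<beta>. c * f \<beta>) \<subseteq> spt f" unfolding spt_def by auto
  then have "ev (\<lambda>\<beta>. c * f \<beta>) xv t = (\<Sum>\<beta>\<in>spt f. evw (\<lambda>\<beta>. c * f \<beta>) xv t \<beta>)"
    using ev_super[OF assms] by blast
  also have "\<dots> = c * (\<Sum>\<beta>\<in>spt f. evw f xv t \<beta>)"
    unfolding sum_distrib_left by (rule sum.cong) (auto simp: evw_def)
  finally show ?thesis unfolding ev_def .
qed

lemma ev_zero: "ev (\<lambda>_. 0) xv t = 0"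
  unfolding ev_def spt_def by simp

lemma ev_mulx:
  assumes "finite (spt f)"
  shows "ev (mulx x f) xv t = xv x * ev f xv t"
proof -
  have "ev (mulx x f) xv t = (\<Sum>\<beta>\<in>add_mset (2*x) ` spt f. evw (mulx x f) xv t \<beta>)"
    unfolding ev_def spt_mulx ..
  also have "\<dots> = (\<Sum>\<gamma>\<in>spt f. evw (mulx x f) xv t (add_mset (2*x) \<gamma>))"
    by (rule sum.reindex[unfolded comp_def]) (auto simp: inj_on_def)
  also have "\<dots> = (\<Sum>\<gamma>\<in>spt f. xv x * evw f xv t \<gamma>)"
    by (rule sum.cong) (auto simp: evw_def mulx_add monv_def)
  finally show ?thesis unfolding ev_def sum_distrib_left .
qed

lemma finite_lists_n: "finite {js :: 'n::finite list. length js = d}"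
  using finite_lists_length_eq[of "UNIV :: 'n set" d] by simp

lemma hp_zero: "homog_poly d (\<lambda>_. 0)"
  unfolding homog_poly_def by (rule exI[of _ "\<lambda>_. 0"]) simp

lemma hp_one: "homog_poly 0 ((\<lambda>_. 1) :: real^'n::finite \<Rightarrow> real)"
  unfolding homog_poly_def
proof (rule exI, rule allI)
  fix X :: "real^'n"
  have "{js :: 'n list. length js = 0} = {[]}" by auto
  then show "1 = (\<Sum>js\<in>{js. length js = 0}. (\<lambda>_. 1) js * (\<Prod>r<0. X $ (js ! r)))" by simp
qed

lemma hp_add: "homog_poly d f \<Longrightarrow> homog_poly d g \<Longrightarrow> homog_poly d (\<lambda>X. f X + g X)"
proof -
  assume "homog_poly d f" "homog_poly d g"
  then obtain c c' where c: "\<forall>X. f X = (\<Sum>js\<in>{js. length js = d}. c js * (\<Prod>r<d. X $ (js ! r)))"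
    and c': "\<forall>X. g X = (\<Sum>js\<in>{js. length js = d}. c' js * (\<Prod>r<d. X $ (js ! r)))"
    unfolding homog_poly_def by blast
  show ?thesis unfolding homog_poly_def
    by (rule exI[of _ "\<lambda>js. c js + c' js"]) (simp add: c c' distrib_right sum.distrib)
qed

lemma hp_sc: "homog_poly d f \<Longrightarrow> homog_poly d (\<lambda>X. a * f X)"
proof -
  assume "homog_poly d f"
  then obtain c where c: "\<forall>X. f X = (\<Sum>js\<in>{js. length js = d}. c js * (\<Prod>r<d. X $ (js ! r)))"
    unfolding homog_poly_def by blast
  show ?thesis unfolding homog_poly_def
    by (rule exI[of _ "\<lambda>js. a * c js"]) (simp add: c sum_distrib_left mult.assoc)
qed

lemma hp_mulvar:
  fixes f :: "real^'n::finite \<Rightarrow> real"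
  assumes "homog_poly d f"
  shows "homog_poly (Suc d) (\<lambda>X. X $ i * f X)"
proof -
  obtain c where c: "\<forall>X. f X = (\<Sum>js\<in>{js. length js = d}. c js * (\<Prod>r<d. X $ (js ! r)))"
    using assms unfolding homog_poly_def by blast
  define c' where "c' = (\<lambda>js::'n list. if js \<noteq> [] \<and> hd js = i then c (tl js) else 0)"
  have L: "{js :: 'n list. length js = Suc d} = (\<lambda>(xs, n). n # xs) ` ({js. length js = d} \<times> UNIV)"
    using lists_length_Suc_eq[of UNIV d] by simp
  show ?thesis unfolding homog_poly_def
  proof (rule exI[of _ c'], rule allI)
  fix X
  have "(\<Sum>js\<in>{js. length js = Suc d}. c' js * (\<Prod>r<Suc d. X $ (js ! r)))
      = (\<Sum>q\<in>{js. length js = d} \<times> UNIV. c' (snd q # fst q) * (\<Prod>r<Suc d. X $ ((snd q # fst q) ! r)))"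
    unfolding L by (subst sum.reindex) (auto simp: inj_on_def case_prod_beta)
  also have "\<dots> = (\<Sum>ys\<in>{js. length js = d}. \<Sum>x\<in>UNIV. c' (x # ys) * (\<Prod>r<Suc d. X $ ((x # ys) ! r)))"
    by (simp add: sum.cartesian_product case_prod_beta)
  also have "\<dots> = (\<Sum>ys\<in>{js. length js = d}. X $ i * (c ys * (\<Prod>r<d. X $ (ys ! r))))"
  proof (rule sum.cong[OF refl])
    fix ys
    have "(\<Sum>x\<in>UNIV. c' (x # ys) * (\<Prod>r<Suc d. X $ ((x # ys) ! r)))
        = (\<Sum>x\<in>UNIV. if x = i then c ys * (X $ x * (\<Prod>r<d. X $ (ys ! r))) else 0)"
      by (rule sum.cong) (auto simp: c'_def prod.lessThan_Suc_shift simp del: prod.lessThan_Suc)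
    also have "\<dots> = X $ i * (c ys * (\<Prod>r<d. X $ (ys ! r)))" by simp
    finally show "(\<Sum>x\<in>UNIV. c' (x # ys) * (\<Prod>r<Suc d. X $ ((x # ys) ! r)))
        = X $ i * (c ys * (\<Prod>r<d. X $ (ys ! r)))" .
  qed
  also have "\<dots> = X $ i * f X" by (simp add: c sum_distrib_left)
  finally show "X $ i * f X = (\<Sum>js\<in>{js. length js = Suc d}. c' js * (\<Prod>r<Suc d. X $ (js ! r)))" by simp
  qed
qed

lemma G_eval:
  assumes vfin: "\<forall>j. finite (spt (v j))"
  shows "G v E k d f \<Longrightarrow> \<exists>a :: nat \<Rightarrow> real^'n::finite \<Rightarrow> real.
    (\<forall>j. homog_poly (d - j - 2) (a j) \<and> ((d < j+2 \<or> k < j) \<longrightarrow> a j = (\<lambda>_. 0))) \<and>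
    (\<forall>X t. ev f (\<lambda>y. X $ from_nat y) t = (\<Sum>j\<le>k. a j X * ev (v j) (\<lambda>y. X $ from_nat y) t))"
proof (induction rule: G.induct)
  case (Gv j)
  define a where "a = (\<lambda>i (X::real^'n). if i = j then (1::real) else 0)"
  have "homog_poly (j + 2 - i - 2) (a i) \<and> ((j + 2 < i+2 \<or> k < i) \<longrightarrow> a i = (\<lambda>_. 0))" for i
    using hp_one hp_zero Gv by (cases "i = j") (auto simp: a_def)
  moreover have "ev (v j) (\<lambda>y. X $ from_nat y) t = (\<Sum>i\<le>k. a i X * ev (v i) (\<lambda>y. X $ from_nat y) t)" for X t
  proof -
    have "(\<Sum>i\<le>k. a i X * ev (v i) (\<lambda>y. X $ from_nat y) t)
        = (\<Sum>i\<le>k. if i = j then ev (v i) (\<lambda>y. X $ from_nat y) t else 0)"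
      by (rule sum.cong) (auto simp: a_def)
    also have "\<dots> = ev (v j) (\<lambda>y. X $ from_nat y) t" using Gv by (simp add: sum.delta)
    finally show ?thesis by simp
  qed
  ultimately show ?case by blast
next
  case (G0 d)
  show ?case by (rule exI[of _ "\<lambda>_ _. 0"]) (simp add: hp_zero ev_zero)
next
  case (Gadd d f g)
  obtain a :: "nat \<Rightarrow> real^'n \<Rightarrow> real" where a: "\<forall>j. homog_poly (d - j - 2) (a j) \<and> ((d < j+2 \<or> k < j) \<longrightarrow> a j = (\<lambda>_. 0))"
    "\<forall>X t. ev f (\<lambda>y. X $ from_nat y) t = (\<Sum>j\<le>k. a j X * ev (v j) (\<lambda>y. X $ from_nat y) t)"
    using Gadd.IH(1) by blast
  obtain b :: "nat \<Rightarrow> real^'n \<Rightarrow> real" where b: "\<forall>j. homog_poly (d - j - 2) (b j) \<and> ((d < j+2 \<or> k < j) \<longrightarrow> b j = (\<lambda>_. 0))"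
    "\<forall>X t. ev g (\<lambda>y. X $ from_nat y) t = (\<Sum>j\<le>k. b j X * ev (v j) (\<lambda>y. X $ from_nat y) t)"
    using Gadd.IH(2) by blast
  have ff: "finite (spt f)" "finite (spt g)" using G_fin[OF vfin] Gadd.hyps by auto
  show ?case
  proof (rule exI[of _ "\<lambda>j X. a j X + b j X"], rule conjI)
    show "\<forall>j. homog_poly (d - j - 2) (\<lambda>X. a j X + b j X) \<and> ((d < j+2 \<or> k < j) \<longrightarrow> (\<lambda>X. a j X + b j X) = (\<lambda>_. 0))"
      apply (intro allI)
      subgoal for j
        using hp_add[OF conjunct1[OF a(1)[rule_format, of j]] conjunct1[OF b(1)[rule_format, of j]]] a(1) b(1) by auto
      done
  next
    show "\<forall>X t. ev (\<lambda>\<beta>. f \<beta> + g \<beta>) (\<lambda>y. X $ from_nat y) t = (\<Sum>j\<le>k. (a j X + b j X) * ev (v j) (\<lambda>y. X $ from_nat y) t)"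
      using ev_add[OF ff] a(2) b(2) by (simp add: distrib_right sum.distrib)
  qed
next
  case (Gsc d f c)
  obtain a :: "nat \<Rightarrow> real^'n \<Rightarrow> real" where a: "\<forall>j. homog_poly (d - j - 2) (a j) \<and> ((d < j+2 \<or> k < j) \<longrightarrow> a j = (\<lambda>_. 0))"
    "\<forall>X t. ev f (\<lambda>y. X $ from_nat y) t = (\<Sum>j\<le>k. a j X * ev (v j) (\<lambda>y. X $ from_nat y) t)"
    using Gsc.IH by blast
  have ff: "finite (spt f)" using G_fin[OF vfin] Gsc.hyps by auto
  show ?case
  proof (rule exI[of _ "\<lambda>j X. c * a j X"], rule conjI)
    show "\<forall>j. homog_poly (d - j - 2) (\<lambda>X. c * a j X) \<and> ((d < j+2 \<or> k < j) \<longrightarrow> (\<lambda>X. c * a j X) = (\<lambda>_. 0))"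
      using a(1) hp_sc by auto
  next
    show "\<forall>X t. ev (\<lambda>\<beta>. c * f \<beta>) (\<lambda>y. X $ from_nat y) t = (\<Sum>j\<le>k. (c * a j X) * ev (v j) (\<lambda>y. X $ from_nat y) t)"
      using ev_sc[OF ff] a(2) by (simp add: sum_distrib_left mult.assoc)
  qed
next
  case (Gmul x d f)
  obtain a :: "nat \<Rightarrow> real^'n \<Rightarrow> real" where a: "\<forall>j. homog_poly (d - j - 2) (a j) \<and> ((d < j+2 \<or> k < j) \<longrightarrow> a j = (\<lambda>_. 0))"
    "\<forall>X t. ev f (\<lambda>y. X $ from_nat y) t = (\<Sum>j\<le>k. a j X * ev (v j) (\<lambda>y. X $ from_nat y) t)"
    using Gmul.IH by blast
  have ff: "finite (spt f)" using G_fin[OF vfin] Gmul.hyps by auto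
  show ?case
  proof (rule exI[of _ "\<lambda>j X. X $ from_nat x * a j X"], rule conjI)
    show "\<forall>j. homog_poly (Suc d - j - 2) (\<lambda>X. X $ from_nat x * a j X) \<and>
      ((Suc d < j+2 \<or> k < j) \<longrightarrow> (\<lambda>X. X $ from_nat x * a j X) = (\<lambda>_. 0))"
    apply (intro allI)
    subgoal for j
    proof (cases "d < j + 2 \<or> k < j")
      case True
      then have "a j = (\<lambda>_. 0)" using a(1) by blast
      then show ?thesis using hp_zero by simp
    next
      case False
      then have "Suc d - j - 2 = Suc (d - j - 2)" by arith
      then show ?thesis using hp_mulvar[of "d - j - 2" "a j"] a(1) False by auto
    qed
    done
  next
    show "\<forall>X t. ev (mulx x f) (\<lambda>y. X $ from_nat y) t = (\<Sum>j\<le>k. (X $ from_nat x * a j X) * ev (v j) (\<lambda>y. X $ from_nat y) t)"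
      using ev_mulx[OF ff] a(2) by (simp add: sum_distrib_left mult.assoc)
  qed
qed


lemma ev_of_sum:
  assumes "finite I"
  shows "ev (\<lambda>\<beta>. \<Sum>q\<in>I. if \<beta> = K q then N q else 0) xv t
    = (\<Sum>q\<in>I. if filter_mset odd (K q) = {#2*t+1#} then N q * monv xv (K q) else 0)"
proof -
  define F where "F = (\<lambda>\<beta>. \<Sum>q\<in>I. if \<beta> = K q then N q else 0)"
  define h where "h = (\<lambda>q. if filter_mset odd (K q) = {#2*t+1#} then N q * monv xv (K q) else 0)"
  have fs: "finite (K ` I)" using assms by simp
  have sub: "spt F \<subseteq> K ` I"
  proof
    fix \<beta> assume "\<beta> \<in> spt F"
    then have "(\<Sum>q\<in>I. if \<beta> = K q then N q else 0) \<noteq> 0" unfolding spt_def F_def by simp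
    then obtain q where "q \<in> I" "(if \<beta> = K q then N q else 0) \<noteq> 0"
      using sum.not_neutral_contains_not_neutral by blast
    then show "\<beta> \<in> K ` I" by (auto split: if_splits)
  qed
  have "ev F xv t = (\<Sum>\<beta>\<in>K ` I. evw F xv t \<beta>)" by (rule ev_super[OF fs sub])
  also have "\<dots> = (\<Sum>\<beta>\<in>K ` I. \<Sum>q\<in>I. if \<beta> = K q then h q else 0)"
  proof (rule sum.cong[OF refl])
    fix \<beta>
    show "evw F xv t \<beta> = (\<Sum>q\<in>I. if \<beta> = K q then h q else 0)"
    proof (cases "filter_mset odd \<beta> = {#2*t+1#}")
      case True
      have "evw F xv t \<beta> = (\<Sum>q\<in>I. (if \<beta> = K q then N q else 0) * monv xv \<beta>)"
        using True unfolding evw_def F_def sum_distrib_right by simp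
      also have "\<dots> = (\<Sum>q\<in>I. if \<beta> = K q then h q else 0)"
        unfolding h_def by (rule sum.cong) (use True in auto)
      finally show ?thesis .
    next
      case False
      then have "(\<Sum>q\<in>I. if \<beta> = K q then h q else 0) = 0"
        unfolding h_def by (intro sum.neutral) auto
      then show ?thesis using False unfolding evw_def by simp
    qed
  qed
  also have "\<dots> = (\<Sum>q\<in>I. \<Sum>\<beta>\<in>K ` I. if \<beta> = K q then h q else 0)" by (rule sum.swap)
  also have "\<dots> = (\<Sum>q\<in>I. h q)" by (rule sum.cong[OF refl]) (use fs in \<open>simp add: sum.delta\<close>)
  finally show ?thesis unfolding F_def h_def .
qed

definition Kf :: "'n::finite list \<Rightarrow> 'n \<Rightarrow> 'n \<Rightarrow> 'n \<Rightarrow> 'n \<Rightarrow> nat multiset" where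
  "Kf js b c i a = image_mset (\<lambda>z. 2 * to_nat z) (mset (js @ [b, c])) + {#2 * to_nat (i, a) + 1#}"

definition Vf :: "(real^'n \<Rightarrow> real^'n^'n) \<Rightarrow> real^'n \<Rightarrow> nat \<Rightarrow> nat multiset \<Rightarrow> real" where
  "Vf g p k \<beta> = (\<Sum>q\<in>{js. length js = k} \<times> UNIV \<times> UNIV \<times> UNIV \<times> UNIV.
     case q of (js, b, c, i, a) \<Rightarrow> if \<beta> = Kf js b c i a then nabla_curv g k p i (js @ [a, b, c]) else 0)"

lemma filt_odd_img: "filter_mset odd (image_mset (\<lambda>z. 2 * h z) M) = {#}"
  by (induction M) auto

lemma filt_even_img: "filter_mset even (image_mset (\<lambda>z. 2 * h z) M) = image_mset (\<lambda>z. 2 * h z) M"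
  by (induction M) auto

lemma Kf_odd: "filter_mset odd (Kf js b c i a) = {#2 * to_nat (i, a) + 1#}"
  unfolding Kf_def by (simp add: filt_odd_img)

lemma Kf_even: "filter_mset even (Kf js b c i a) = image_mset (\<lambda>z. 2 * to_nat z) (mset (js @ [b, c]))"
  unfolding Kf_def by (simp add: filt_even_img)

lemma prod_list_map_nth: "prod_list (map f xs) = (\<Prod>r<length xs. f (xs ! r))"
  by (induction xs) (simp_all add: prod.lessThan_Suc_shift del: prod.lessThan_Suc)

lemma monv_Kf: "monv (\<lambda>y. X $ from_nat y) (Kf js b c i a) = (\<Prod>r<length js. X $ (js ! r)) * X $ b * X $ c"
proof -
  have "monv (\<lambda>y. X $ from_nat y) (Kf js b c i a) = prod_mset (image_mset (\<lambda>z. X $ z) (mset (js @ [b, c])))"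
    unfolding monv_def Kf_even by (simp add: multiset.map_comp comp_def)
  also have "\<dots> = prod_list (map (\<lambda>z. X $ z) (js @ [b, c]))"
    by (simp only: mset_map[symmetric] prod_mset_prod_list)
  also have "\<dots> = (\<Prod>r<length js. X $ (js ! r)) * X $ b * X $ c"
    by (simp add: prod_list_map_nth)
  finally show ?thesis .
qed

lemma Vf_alt: "Vf g p k = (\<lambda>\<beta>. \<Sum>q\<in>{js. length js = k} \<times> UNIV \<times> UNIV \<times> UNIV \<times> UNIV.
    if \<beta> = (case q of (js, b, c, i, a) \<Rightarrow> Kf js b c i a) then (case q of (js, b, c, i, a) \<Rightarrow> nabla_curv g k p i (js @ [a, b, c])) else 0)"
  unfolding Vf_def by (intro ext sum.cong) (auto split: prod.splits)

lemma sum5: "(\<Sum>q\<in>A \<times> B \<times> C \<times> D \<times> E. case q of (a, b, c, d, e) \<Rightarrow> f a b c d e)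
   = (\<Sum>a\<in>A. \<Sum>b\<in>B. \<Sum>c\<in>C. \<Sum>d\<in>D. \<Sum>e\<in>E. f a b c d e)"
  by (simp add: sum.cartesian_product)

lemma sum_delta2: "(\<Sum>i'\<in>(UNIV::'a::finite set). \<Sum>a'\<in>(UNIV::'b::finite set). if to_nat (i', a') = to_nat (i, a) then F i' a' else (0::real)) = F i a"
proof -
  have "(\<Sum>i'\<in>(UNIV::'a set). \<Sum>a'\<in>(UNIV::'b set). if to_nat (i', a') = to_nat (i, a) then F i' a' else (0::real))
    = (\<Sum>i'\<in>(UNIV::'a set). if i' = i then (\<Sum>a'\<in>(UNIV::'b set). if a' = a then F i' a' else 0) else 0)"
    by (intro sum.cong refl) auto
  also have "\<dots> = F i a" by (simp add: sum.delta)
  finally show ?thesis .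
qed

lemma ev_Vf:
  fixes X :: "real^'n::finite"
  shows "ev (Vf g p k) (\<lambda>y. X $ from_nat y) (to_nat (i, a))
  = (\<Sum>js\<in>{js. length js = k}. \<Sum>b\<in>UNIV. \<Sum>c\<in>UNIV.
       nabla_curv g k p i (js @ [a, b, c]) * ((\<Prod>r<k. X $ (js ! r)) * X $ b * X $ c))"
proof -
  have fin: "finite ({js :: 'n list. length js = k} \<times> (UNIV :: 'n set) \<times> (UNIV :: 'n set) \<times> (UNIV :: 'n set) \<times> (UNIV :: 'n set))"
    by (intro finite_cartesian_product finite_lists_n) simp_all
  have "ev (Vf g p k) (\<lambda>y. X $ from_nat y) (to_nat (i, a))
    = (\<Sum>q\<in>{js. length js = k} \<times> UNIV \<times> UNIV \<times> UNIV \<times> UNIV.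
        case q of (js, b, c, i', a') \<Rightarrow> (if to_nat (i', a') = to_nat (i, a) then
          nabla_curv g k p i' (js @ [a', b, c]) * ((\<Prod>r<k. X $ (js ! r)) * X $ b * X $ c) else 0))"
    unfolding Vf_alt ev_of_sum[OF fin]
    by (intro sum.cong refl) (auto split: prod.splits simp: Kf_odd monv_Kf mult.assoc)
  also have "\<dots> = (\<Sum>js\<in>{js. length js = k}. \<Sum>b\<in>UNIV. \<Sum>c\<in>UNIV. \<Sum>i'\<in>UNIV. \<Sum>a'\<in>UNIV.
        (if to_nat (i', a') = to_nat (i, a) then
          nabla_curv g k p i' (js @ [a', b, c]) * ((\<Prod>r<k. X $ (js ! r)) * X $ b * X $ c) else 0))"
    by (rule sum5)
  also have "\<dots> = (\<Sum>js\<in>{js. length js = k}. \<Sum>b\<in>UNIV. \<Sum>c\<in>UNIV.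
       nabla_curv g k p i (js @ [a, b, c]) * ((\<Prod>r<k. X $ (js ! r)) * X $ b * X $ c))"
    by (simp only: sum_delta2)
  finally show ?thesis .
qed

lemma calR_ev:
  fixes X :: "real^'n::finite"
  shows "calR g k p X Y $ i = (\<Sum>a\<in>UNIV. Y $ a * ev (Vf g p k) (\<lambda>y. X $ from_nat y) (to_nat (i, a)))"
proof -
  have "(\<Sum>a\<in>UNIV. Y $ a * ev (Vf g p k) (\<lambda>y. X $ from_nat y) (to_nat (i, a)))
     = (\<Sum>a\<in>UNIV. \<Sum>js\<in>{js. length js = k}. \<Sum>b\<in>UNIV. \<Sum>c\<in>UNIV.
          Y $ a * (nabla_curv g k p i (js @ [a, b, c]) * ((\<Prod>r<k. X $ (js ! r)) * X $ b * X $ c)))"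
    unfolding ev_Vf by (simp add: sum_distrib_left)
  also have "\<dots> = (\<Sum>js\<in>{js. length js = k}. \<Sum>a\<in>UNIV. \<Sum>b\<in>UNIV. \<Sum>c\<in>UNIV.
          Y $ a * (nabla_curv g k p i (js @ [a, b, c]) * ((\<Prod>r<k. X $ (js ! r)) * X $ b * X $ c)))"
    by (rule sum.swap)
  also have "\<dots> = calR g k p X Y $ i"
    unfolding calR_def by (simp add: ac_simps)
  finally show ?thesis by simp
qed


lemma Vf_nz:
  fixes g :: "real^'n::finite \<Rightarrow> real^'n^'n"
  assumes "Vf g p k \<beta> \<noteq> 0"
  shows "\<exists>(js :: 'n list) (b :: 'n) c i a. length js = k \<and> \<beta> = Kf js b c i a"
proof -
  obtain q where "q \<in> {js. length js = k} \<times> (UNIV :: 'n set) \<times> (UNIV :: 'n set) \<times> (UNIV :: 'n set) \<times> (UNIV :: 'n set)"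
    and "(case q of (js, b, c, i, a) \<Rightarrow> if \<beta> = Kf js b c i a then nabla_curv g k p i (js @ [a, b, c]) else 0) \<noteq> 0"
    using assms unfolding Vf_def using sum.not_neutral_contains_not_neutral by blast
  moreover obtain js :: "'n list" and b c i a :: 'n where q: "q = (js, b, c, i, a)" by (cases q) auto
  ultimately have "length js = k" "\<beta> = Kf js b c i a" by (auto split: if_splits)
  then show ?thesis by blast
qed

lemma reidx:
  fixes k :: nat
  assumes "0 < k"
  shows "(\<Sum>i=1..k. h (k - i)) = (\<Sum>j\<le>k-1. (h j :: real^'n))"
proof (rule sum.reindex_bij_witness[of _ "\<lambda>j. k - j" "\<lambda>i. k - i"])
  fix a assume "a \<in> {1..k}"
  then have "1 \<le> a" "a \<le> k" by auto
  then show "k - (k - a) = a" by simp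
  from \<open>1 \<le> a\<close> show "k - a \<in> {..k - 1}" by (simp add: diff_le_mono2)
next
  fix b assume "b \<in> {..k - 1}"
  then have "b \<le> k - 1" by auto
  then show "k - (k - b) = b" using assms by simp
  from \<open>b \<le> k - 1\<close> show "k - b \<in> {1..k}" using assms by simp
qed simp

theorem mainTheorem16:
  fixes g :: "real^'n::finite \<Rightarrow> real^'n^'n" and U :: "(real^'n) set" and p :: "real^'n"
  assumes "open U" and "p \<in> U"
    and "\<forall>x\<in>U. transpose (g x) = g x"
    and "\<forall>x\<in>U. invertible (g x)"
    and "\<forall>i j. smooth_on U (\<lambda>x. g x $ i $ j)"
  shows "\<exists>k>0. \<exists>a :: nat \<Rightarrow> real^'n \<Rightarrow> real.
           (\<forall>i\<in>{1..k}. homog_poly i (a i)) \<and>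
           (\<forall>X Y. calR g k p X Y = - (\<Sum>i=1..k. a i X *\<^sub>R calR g (k - i) p X Y))"
proof -
  define V where "V = Vf g p"
  define E where "E = range (to_nat :: 'n \<Rightarrow> nat)"
  define TT where "TT = range (to_nat :: 'n \<times> 'n \<Rightarrow> nat)"
  have finE: "finite E" unfolding E_def by simp
  have finT: "finite TT" unfolding TT_def by simp
  have vfin: "\<forall>j. finite (spt (V j))"
  proof
    fix j
    have "spt (V j) \<subseteq> (\<lambda>(js, b, c, i, a). Kf js b c i a) ` ({js :: 'n list. length js = j} \<times> (UNIV :: 'n set) \<times> (UNIV :: 'n set) \<times> (UNIV :: 'n set) \<times> (UNIV :: 'n set))"
    proof
      fix \<beta> assume "\<beta> \<in> spt (V j)"
      then obtain js :: "'n list" and b c i a :: 'n where "length js = j" "\<beta> = Kf js b c i a"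
        using Vf_nz[of g p j \<beta>] unfolding spt_def V_def by auto
      then show "\<beta> \<in> (\<lambda>(js, b, c, i, a). Kf js b c i a) ` ({js :: 'n list. length js = j} \<times> (UNIV :: 'n set) \<times> (UNIV :: 'n set) \<times> (UNIV :: 'n set) \<times> (UNIV :: 'n set))"
        by (intro image_eqI[of _ _ "(js, b, c, i, a)"]) auto
    qed
    moreover have "finite ({js :: 'n list. length js = j} \<times> (UNIV :: 'n set) \<times> (UNIV :: 'n set) \<times> (UNIV :: 'n set) \<times> (UNIV :: 'n set))"
      by (intro finite_cartesian_product finite_lists_n) simp_all
    ultimately show "finite (spt (V j))" by (meson finite_imageI finite_subset)
  qed
  have vok: "\<forall>j \<beta>. V j \<beta> \<noteq> 0 \<longrightarrow> okb E TT (j+2) \<beta>"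
  proof (intro allI impI)
    fix j \<beta> assume "V j \<beta> \<noteq> 0"
    then obtain js :: "'n list" and b c i a :: 'n where L: "length js = j" and B: "\<beta> = Kf js b c i a"
      using Vf_nz[of g p j \<beta>] unfolding V_def by auto
    have o1: "\<exists>t\<in>TT. filter_mset odd \<beta> = {#2*t+1#}" unfolding B Kf_odd TT_def by auto
    have o2: "size (filter_mset even \<beta>) = j + 2" unfolding B Kf_even using L by simp
    have o3: "\<forall>y\<in>#\<beta>. even y \<longrightarrow> y div 2 \<in> E"
    proof (intro ballI impI)
      fix y assume y: "y \<in># \<beta>" and ev: "even y"
      then have "y \<in># filter_mset even \<beta>" by simp
      then have "y \<in># image_mset (\<lambda>z. 2 * to_nat z) (mset (js @ [b, c]))" unfolding B Kf_even .
      then obtain z :: 'n where "y = 2 * to_nat z" by auto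
      then show "y div 2 \<in> E" unfolding E_def by simp
    qed
    show "okb E TT (j+2) \<beta>" unfolding okb_def using o1 o2 o3 by blast
  qed
  obtain k where k0: "k > 0" and Gk: "G V E (k-1) (k+2) (V k)"
    using core[OF finE finT vfin vok] by blast
  obtain a :: "nat \<Rightarrow> real^'n \<Rightarrow> real" where
    ha: "\<forall>j. homog_poly (k + 2 - j - 2) (a j) \<and> ((k + 2 < j+2 \<or> k - 1 < j) \<longrightarrow> a j = (\<lambda>_. 0))"
    and he: "\<forall>X t. ev (V k) (\<lambda>y. X $ from_nat y) t = (\<Sum>j\<le>k-1. a j X * ev (V j) (\<lambda>y. X $ from_nat y) t)"
    using G_eval[OF vfin Gk] by blast
  define A where "A = (\<lambda>i X. (-1) * a (k - i) X)"
  have hom: "\<forall>i\<in>{1..k}. homog_poly i (A i)"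
  proof
    fix i assume i: "i \<in> {1..k}"
    then have "k + 2 - (k - i) - 2 = i" by auto
    then have "homog_poly i (a (k - i))" using ha by metis
    then show "homog_poly i (A i)" unfolding A_def by (rule hp_sc)
  qed
  have eq: "calR g k p X Y = - (\<Sum>i=1..k. A i X *\<^sub>R calR g (k - i) p X Y)" for X Y
  proof -
    have "calR g k p X Y $ i' = (\<Sum>j\<le>k-1. a j X * calR g j p X Y $ i')" for i'
    proof -
      have "calR g k p X Y $ i' = (\<Sum>a'\<in>UNIV. Y $ a' * (\<Sum>j\<le>k-1. a j X * ev (V j) (\<lambda>y. X $ from_nat y) (to_nat (i', a'))))"
        unfolding calR_ev[of g k p X Y i'] V_def[symmetric] using he by simp
      also have "\<dots> = (\<Sum>j\<le>k-1. a j X * (\<Sum>a'\<in>UNIV. Y $ a' * ev (V j) (\<lambda>y. X $ from_nat y) (to_nat (i', a'))))"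
        by (simp add: sum_distrib_left ac_simps sum.swap[of _ UNIV])
      also have "\<dots> = (\<Sum>j\<le>k-1. a j X * calR g j p X Y $ i')"
        unfolding V_def calR_ev ..
      finally show ?thesis .
    qed
    moreover have "(- (\<Sum>i=1..k. A i X *\<^sub>R calR g (k - i) p X Y)) $ i' = (\<Sum>j\<le>k-1. a j X * calR g j p X Y $ i')" for i'
    proof -
      have "(- (\<Sum>i=1..k. A i X *\<^sub>R calR g (k - i) p X Y)) = (\<Sum>i=1..k. a (k - i) X *\<^sub>R calR g (k - i) p X Y)"
        unfolding A_def by (simp add: sum_negf[symmetric])
      also have "\<dots> = (\<Sum>j\<le>k-1. a j X *\<^sub>R calR g j p X Y)"
        using reidx[OF k0, of "\<lambda>j. a j X *\<^sub>R calR g j p X Y"] by simp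
      finally show ?thesis by (simp add: sum_component)
    qed
    ultimately show ?thesis by (simp add: vec_eq_iff)
  qed
  show ?thesis using k0 hom eq by blast
qed

end
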